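(* Let $A$ be a finite set of alternatives with $|A|\ge 3$, let $N=\{1,\dots,n\}$ with $n\ge 2$, and let $\mathbb{D}$ be a minimally rich and L-tops-only domain of linear orders over $A$. If $\mathbb{D}$ is connected with two distinct neighbours, then every unanimous and locally strategy-proof social choice function $f:\mathbb{D}^n\to A$ satisfies dictatorship.
   Context: A domain is a set $\mathbb{D}$ of linear orders (strict preferences) over $A$; a preference profile is $P=(P_1,\dots,P_n)\in\mathbb{D}^n$. For a linear order $P_i$, $r_k(P_i)$ is its $k$-th ranked alternative. $\mathbb{D}$ is minimally rich if every $a\in A$ is ranked first in some $P_i\in\mathbb{D}$. Two linear orders $P_i,P_i'$ are adjacent ($P_i\sim P_i'$) if $P_i'$ is obtained from $P_i$ by swapping two consecutively ranked alternatives and leaving all other ranks unchanged. A social choice function (scf) is a map $f:\mathbb{D}^n\to A$. It is unanimous if $f(P)=a$ whenever every voter ranks $a$ first. It is locally strategy-proof if there is no voter $i$, profile $P$, and $P_i'\in\mathbb{D}$ with $P_i'\sim P_i$ such that $f(P_i',P_{-i})\,P_i\,f(P_i,P_{-i})$. It satisfies dictatorship if there is a voter $i$ with $f(P)=r_1(P_i)$ for all $P\in\mathbb{D}^n$. It satisfies tops-onlyness if $f(P)=f(P')$ whenever $r_1(P_i)=r_1(P_i')$ for all $i$. $\mathbb{D}$ is L-tops-only if every unanimous and locally strategy-proof scf $f:\mathbb{D}^n\to A$ satisfies tops-onlyness. A path in $\mathbb{D}$ is a sequence of distinct preferences in $\mathbb{D}$ in which consecutive ones are adjacent; $\mathbb{D}$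 is connected if any two of its preferences are joined by a path in $\mathbb{D}$. For $\bar{\mathbb{D}}\subseteq\mathbb{D}$, a neighbour of $\bar{\mathbb{D}}$ in $\mathbb{D}$ is a $P_i\in\mathbb{D}\setminus\bar{\mathbb{D}}$ adjacent to some element of $\bar{\mathbb{D}}$. Two preferences $P_i,P_i'\in\mathbb{D}$ are top-connected in $\mathbb{D}$ if there is a path from $P_i$ to $P_i'$ in $\mathbb{D}$ all of whose members have the same top-ranked alternative. The top-connected closure $\mathbb{D}^{TCC}(P_i)$ is the set of preferences in $\mathbb{D}$ top-connected to $P_i$, together with $P_i$. $\mathbb{D}$ is connected with two distinct neighbours if (1) $\mathbb{D}$ is connected, and (2) for every $P_i\in\mathbb{D}$ there exist two neighbours $P_i',P_i''$ of $\mathbb{D}^{TCC}(P_i)$ in $\mathbb{D}$ with $r_1(P_i')\ne r_1(P_i'')$. *)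

theory Defs
  imports Main "HOL-Library.FuncSet"
begin

text \<open>A linear order (strict preference) over A is represented as the list of the
alternatives of A ranked from best to worst (a duplicate-free enumeration of A).
The k-th ranked alternative r_k(L) is L ! (k-1); the top r_1(L) is hd L.\<close>

definition linear_order_on :: "'a set \<Rightarrow> 'a list \<Rightarrow> bool" where
  "linear_order_on A L \<longleftrightarrow> distinct L \<and> set L = A"

definition top :: "'a list \<Rightarrow> 'a" where
  "top L = hd L"

definition pref :: "'a list \<Rightarrow> 'a \<Rightarrow> 'a \<Rightarrow> bool" where
  "pref L x y \<longleftrightarrow> (\<exists>i j. i < j \<and> j < length L \<and> L ! i = x \<and> L ! j = y)"

definition domain :: "'a set \<Rightarrow> 'a list set \<Rightarrow> bool" where
  "domain A D \<longleftrightarrow> D \<subseteq> {L. linear_order_on A L}"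

definition minimally_rich :: "'a set \<Rightarrow> 'a list set \<Rightarrow> bool" where
  "minimally_rich A D \<longleftrightarrow> (\<forall>a\<in>A. \<exists>L\<in>D. top L = a)"

definition adjacent :: "'a list \<Rightarrow> 'a list \<Rightarrow> bool" where
  "adjacent L L' \<longleftrightarrow>
     (\<exists>k. Suc k < length L \<and> L' = L[k := L ! Suc k, Suc k := L ! k])"

definition profiles :: "nat \<Rightarrow> 'a list set \<Rightarrow> (nat \<Rightarrow> 'a list) set" where
  "profiles n D = (\<Pi>\<^sub>E i\<in>{..<n}. D)"

definition scf :: "'a set \<Rightarrow> nat \<Rightarrow> 'a list set \<Rightarrow> ((nat \<Rightarrow> 'a list) \<Rightarrow> 'a) \<Rightarrow> bool" where
  "scf A n D f \<longleftrightarrow> (\<forall>P\<in>profiles n D. f P \<in> A)"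

definition unanimous :: "nat \<Rightarrow> 'a list set \<Rightarrow> ((nat \<Rightarrow> 'a list) \<Rightarrow> 'a) \<Rightarrow> bool" where
  "unanimous n D f \<longleftrightarrow>
     (\<forall>P\<in>profiles n D. \<forall>a. (\<forall>i<n. top (P i) = a) \<longrightarrow> f P = a)"

definition locally_strategy_proof ::
    "nat \<Rightarrow> 'a list set \<Rightarrow> ((nat \<Rightarrow> 'a list) \<Rightarrow> 'a) \<Rightarrow> bool" where
  "locally_strategy_proof n D f \<longleftrightarrow>
     \<not> (\<exists>i<n. \<exists>P\<in>profiles n D. \<exists>L'\<in>D.
          adjacent (P i) L' \<and> pref (P i) (f (P(i := L'))) (f P))"

definition dictatorial :: "nat \<Rightarrow> 'a list set \<Rightarrow> ((nat \<Rightarrow> 'a list) \<Rightarrow> 'a) \<Rightarrow> bool" where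
  "dictatorial n D f \<longleftrightarrow> (\<exists>i<n. \<forall>P\<in>profiles n D. f P = top (P i))"

definition tops_only :: "nat \<Rightarrow> 'a list set \<Rightarrow> ((nat \<Rightarrow> 'a list) \<Rightarrow> 'a) \<Rightarrow> bool" where
  "tops_only n D f \<longleftrightarrow>
     (\<forall>P\<in>profiles n D. \<forall>P'\<in>profiles n D.
        (\<forall>i<n. top (P i) = top (P' i)) \<longrightarrow> f P = f P')"

definition L_tops_only :: "'a set \<Rightarrow> nat \<Rightarrow> 'a list set \<Rightarrow> bool" where
  "L_tops_only A n D \<longleftrightarrow>
     (\<forall>f. scf A n D f \<and> unanimous n D f \<and> locally_strategy_proof n D f
          \<longrightarrow> tops_only n D f)"

definition path_in :: "'a list set \<Rightarrow> 'a list list \<Rightarrow> bool" where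
  "path_in D ps \<longleftrightarrow> ps \<noteq> [] \<and> distinct ps \<and> set ps \<subseteq> D \<and>
     (\<forall>k. Suc k < length ps \<longrightarrow> adjacent (ps ! k) (ps ! Suc k))"

definition connected_dom :: "'a list set \<Rightarrow> bool" where
  "connected_dom D \<longleftrightarrow>
     (\<forall>L\<in>D. \<forall>L'\<in>D. \<exists>ps. path_in D ps \<and> hd ps = L \<and> last ps = L')"

definition top_connected :: "'a list set \<Rightarrow> 'a list \<Rightarrow> 'a list \<Rightarrow> bool" where
  "top_connected D L L' \<longleftrightarrow>
     (\<exists>ps. path_in D ps \<and> hd ps = L \<and> last ps = L' \<and>
           (\<forall>Q\<in>set ps. top Q = top L))"

definition TCC :: "'a list set \<Rightarrow> 'a list \<Rightarrow> 'a list set" where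
  "TCC D L = {L'\<in>D. top_connected D L L'} \<union> {L}"

definition neighbour :: "'a list set \<Rightarrow> 'a list set \<Rightarrow> 'a list \<Rightarrow> bool" where
  "neighbour D S L \<longleftrightarrow> L \<in> D - S \<and> (\<exists>Q\<in>S. adjacent Q L)"

definition connected_two_neighbours :: "'a list set \<Rightarrow> bool" where
  "connected_two_neighbours D \<longleftrightarrow> connected_dom D \<and>
     (\<forall>L\<in>D. \<exists>L' L''. neighbour D (TCC D L) L' \<and> neighbour D (TCC D L) L'' \<and>
                      top L' \<noteq> top L'')"

end

theory Submission
  imports Defs
begin


locale grph =
  fixes A :: "'a set" and E :: "'a \<Rightarrow> 'a \<Rightarrow> bool"
  assumes finA: "finite A"
  and EA: "E a b \<Longrightarrow> a \<in> A \<and> b \<in> A"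
  and Esym: "E a b \<Longrightarrow> E b a"
  and Eirr: "\<not> E a a"
  and conn: "a \<in> A \<Longrightarrow> b \<in> A \<Longrightarrow> (a,b) \<in> {(x,y). E x y}\<^sup>*"
  and deg2: "a \<in> A \<Longrightarrow> \<exists>b c. E a b \<and> E a c \<and> b \<noteq> c"
begin

definition Ep :: "'a \<Rightarrow> ('a \<times> 'a) set" where
  "Ep p = {(x,y). E x y \<and> x \<noteq> p \<and> y \<noteq> p}"

definition R :: "'a \<Rightarrow> 'a \<Rightarrow> 'a set" where
  "R p w = {c. (w,c) \<in> (Ep p)\<^sup>*}"

lemma Ep_sym: assumes "(a,b) \<in> (Ep p)\<^sup>*" shows "(b,a) \<in> (Ep p)\<^sup>*"
proof -
  have e: "(Ep p)\<inverse> = Ep p" using Esym by (auto simp: Ep_def)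
  have "(b,a) \<in> ((Ep p)\<^sup>*)\<inverse>" using assms by simp
  then have "(b,a) \<in> ((Ep p)\<inverse>)\<^sup>*" by (simp add: rtrancl_converse)
  then show ?thesis using e by simp
qed

lemma R_start: "w \<in> R p w" by (simp add: R_def)

lemma R_neq: assumes "c \<in> R p w" "w \<noteq> p" shows "c \<noteq> p"
proof -
  have "(w,c) \<in> (Ep p)\<^sup>*" using assms by (simp add: R_def)
  then show ?thesis
    by (induction rule: rtrancl_induct) (auto simp: Ep_def assms)
qed

lemma R_A: assumes "c \<in> R p w" "w \<in> A" shows "c \<in> A"
proof -
  have "(w,c) \<in> (Ep p)\<^sup>*" using assms by (simp add: R_def)
  then show ?thesis
    by (induction rule: rtrancl_induct) (auto simp: Ep_def assms dest: EA)
qed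

lemma R_closed: assumes "c \<in> R p w" "E c d" "d \<noteq> p" "w \<noteq> p" shows "d \<in> R p w"
proof -
  have "c \<noteq> p" using R_neq assms by blast
  then have "(c,d) \<in> Ep p" using assms by (simp add: Ep_def)
  then show ?thesis using assms(1) by (simp add: R_def)
qed

lemma R_conn: assumes "c \<in> R p w" "d \<in> R p w" shows "(c,d) \<in> (Ep p)\<^sup>*"
proof -
  have "(c,w) \<in> (Ep p)\<^sup>*" using Ep_sym assms(1) by (simp add: R_def)
  moreover have "(w,d) \<in> (Ep p)\<^sup>*" using assms(2) by (simp add: R_def)
  ultimately show ?thesis by simp
qed

lemma exit_edge: assumes "(a,b) \<in> {(x,y). E x y}\<^sup>*" "a \<in> S" "b \<notin> S"
  shows "\<exists>c d. c \<in> S \<and> d \<notin> S \<and> E c d"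
  using assms(1,3)
proof (induction rule: rtrancl_induct)
  case base then show ?case using assms(2) by simp
next
  case (step y z)
  show ?case
  proof (cases "y \<in> S")
    case True
    have "E y z" using step.hyps(2) by simp
    then show ?thesis using True step.prems by blast
  next
    case False
    then show ?thesis using step.IH by blast
  qed
qed

lemma first_hit: assumes "w \<in> A" "p \<in> A" "w \<noteq> p" shows "\<exists>s\<in>R p w. E s p"
proof -
  have 1: "(w,p) \<in> {(x,y). E x y}\<^sup>*" using conn[OF assms(1,2)] .
  have 2: "p \<notin> R p w" using R_neq[of p p w] assms(3) by blast
  obtain c d where cd: "c \<in> R p w" "d \<notin> R p w" "E c d"
    using exit_edge[OF 1 R_start 2] by blast
  have "d = p"
  proof (rule ccontr)
    assume "d \<noteq> p"
    then have "d \<in> R p w" using R_closed[OF cd(1) cd(3) _ assms(3)] by blast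
    then show False using cd(2) by blast
  qed
  then show ?thesis using cd by blast
qed

lemma avoid: assumes "(w,d) \<in> (Ep y)\<^sup>*" "c \<notin> R y w" shows "(w,d) \<in> (Ep c)\<^sup>*"
  using assms(1)
proof (induction rule: rtrancl_induct)
  case base then show ?case by simp
next
  case (step b e)
  have "b \<in> R y w" "e \<in> R y w" using step by (auto simp: R_def)
  then have "b \<noteq> c" "e \<noteq> c" using assms(2) by auto
  then have "(b,e) \<in> Ep c" using step(2) by (auto simp: Ep_def)
  then show ?case using step by simp
qed

end

locale two = grph +
  fixes k :: "'a \<Rightarrow> 'a \<Rightarrow> 'a"
  assumes unan: "a \<in> A \<Longrightarrow> k a a = a"
  and kA: "a \<in> A \<Longrightarrow> b \<in> A \<Longrightarrow> k a b \<in> A"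
  and EP1: "E a a' \<Longrightarrow> b \<in> A \<Longrightarrow> k a b \<noteq> k a' b \<Longrightarrow> k a b = a \<and> k a' b = a'"
  and EP2: "E b b' \<Longrightarrow> a \<in> A \<Longrightarrow> k a b \<noteq> k a b' \<Longrightarrow> k a b = b \<and> k a b' = b'"
begin

lemma prop1: assumes "(c,d) \<in> (Ep v)\<^sup>*" "k c y = v" "y \<in> A" shows "k d y = v"
  using assms(1)
proof (induction rule: rtrancl_induct)
  case base then show ?case using assms by simp
next
  case (step b e)
  then have "E b e" "b \<noteq> v" by (auto simp: Ep_def)
  show ?case
  proof (rule ccontr)
    assume "k e y \<noteq> v"
    then have "k b y \<noteq> k e y" using step.IH by simp
    then have "k b y = b" using EP1[OF \<open>E b e\<close> assms(3)] by blast
    then show False using step.IH \<open>b \<noteq> v\<close> by simp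
  qed
qed

lemma prop2: assumes "(c,d) \<in> (Ep v)\<^sup>*" "k x c = v" "x \<in> A" shows "k x d = v"
  using assms(1)
proof (induction rule: rtrancl_induct)
  case base then show ?case using assms by simp
next
  case (step b e)
  then have "E b e" "b \<noteq> v" by (auto simp: Ep_def)
  show ?case
  proof (rule ccontr)
    assume "k x e \<noteq> v"
    then have "k x b \<noteq> k x e" using step.IH by simp
    then have "k x b = b" using EP2[OF \<open>E b e\<close> assms(3)] by blast
    then show False using step.IH \<open>b \<noteq> v\<close> by simp
  qed
qed

lemma stay2: assumes "(b,t) \<in> {(x,y). E x y}\<^sup>*" "k c b = t" "c \<in> A" shows "k c t = t"
  using assms(1,2)
proof (induction rule: converse_rtrancl_induct)
  case base then show ?case by simp
next
  case (step b b')
  show ?case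
  proof (cases "b = t")
    case True then show ?thesis using step by simp
  next
    case False
    have "E b b'" using step by simp
    have "k c b' = t"
    proof (rule ccontr)
      assume "k c b' \<noteq> t"
      then have "k c b \<noteq> k c b'" using step.prems by simp
      then have "k c b = b" using EP2[OF \<open>E b b'\<close> assms(3)] by blast
      then show False using step.prems False by simp
    qed
    then show ?thesis using step by simp
  qed
qed

lemma stay1: assumes "(b,t) \<in> {(x,y). E x y}\<^sup>*" "k b c = t" "c \<in> A" shows "k t c = t"
  using assms(1,2)
proof (induction rule: converse_rtrancl_induct)
  case base then show ?case by simp
next
  case (step b b')
  show ?case
  proof (cases "b = t")
    case True then show ?thesis using step by simp
  next
    case False
    have "E b b'" using step by simp
    have "k b' c = t"
    proof (rule ccontr)
      assume "k b' c \<noteq> t"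
      then have "k b c \<noteq> k b' c" using step.prems by simp
      then have "k b c = b" using EP1[OF \<open>E b b'\<close> assms(3)] by blast
      then show False using step.prems False by simp
    qed
    then show ?thesis using step by simp
  qed
qed

lemma edge2: assumes "E b b'" "a \<in> A" shows "k a b' = k a b \<or> k a b' = b'"
proof (cases "k a b' = k a b")
  case False
  then have "k a b \<noteq> k a b'" by simp
  then show ?thesis using EP2[OF assms] by blast
qed simp

lemma edge1: assumes "E a a'" "b \<in> A" shows "k a' b = k a b \<or> k a' b = a'"
proof (cases "k a' b = k a b")
  case False
  then have "k a b \<noteq> k a' b" by simp
  then show ?thesis using EP1[OF assms] by blast
qed simp

lemma noDV: "p \<in> A \<Longrightarrow> w \<in> A \<Longrightarrow> w \<noteq> p \<Longrightarrow> \<forall>c\<in>R p w. k c p = p \<and> k p c = p \<Longrightarrow> False"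
proof (induction "card (R p w)" arbitrary: p w rule: less_induct)
  case (less p w)
  let ?R = "R p w"
  have RA: "?R \<subseteq> A" using R_A less.prems by blast
  have fin: "finite ?R" using RA finA finite_subset by blast
  obtain u where uR: "u \<in> ?R" and Eup: "E u p" using first_hit less.prems by blast
  have key1: "k c u' = u'" if "u' \<in> ?R" "E u' p" "c \<in> ?R" for u' c
  proof (rule ccontr)
    assume ne: "k c u' \<noteq> u'"
    have cA: "c \<in> A" using RA that(3) by blast
    have u'A: "u' \<in> A" "u' \<noteq> p" using RA that(1) R_neq less.prems(3) by auto
    have "k c p = p" using less.prems(4) that(3) by auto
    then have "k c u' = p" using edge2[OF Esym[OF that(2)] cA] ne by auto
    moreover have "(c,u') \<in> (Ep p)\<^sup>*" using R_conn that by blast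
    ultimately have "k u' u' = p" using prop1 u'A by blast
    then show False using unan u'A by auto
  qed
  have key2: "k u' c = u'" if "u' \<in> ?R" "E u' p" "c \<in> ?R" for u' c
  proof (rule ccontr)
    assume ne: "k u' c \<noteq> u'"
    have cA: "c \<in> A" using RA that(3) by blast
    have u'A: "u' \<in> A" "u' \<noteq> p" using RA that(1) R_neq less.prems(3) by auto
    have "k p c = p" using less.prems(4) that(3) by auto
    then have "k u' c = p" using edge1[OF Esym[OF that(2)] cA] ne by auto
    moreover have "(c,u') \<in> (Ep p)\<^sup>*" using R_conn that by blast
    ultimately have "k u' u' = p" using prop2 u'A by blast
    then show False using unan u'A by auto
  qed
  have uniq: "u' = u" if "u' \<in> ?R" "E u' p" for u'
    using key1[OF that uR] key2[OF uR Eup that(1)] by simp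
  have uA: "u \<in> A" "u \<noteq> p" using RA uR R_neq less.prems(3) by auto
  obtain w' where Euw: "E u w'" and w'p: "w' \<noteq> p" using deg2[OF uA(1)] by blast
  have w'R: "w' \<in> ?R" using R_closed[OF uR Euw w'p less.prems(3)] .
  have w'u: "w' \<noteq> u" using Euw Eirr by blast
  have w'A: "w' \<in> A" using EA Euw by blast
  have sub: "R u w' \<subseteq> ?R - {u}"
  proof
    fix c assume "c \<in> R u w'"
    then have "(w',c) \<in> (Ep u)\<^sup>*" by (simp add: R_def)
    then show "c \<in> ?R - {u}"
    proof (induction rule: rtrancl_induct)
      case base show ?case using w'R w'u by simp
    next
      case (step b d)
      from step.hyps(2) have Ebd: "E b d" "b \<noteq> u" "d \<noteq> u" by (auto simp: Ep_def)
      have "d \<noteq> p"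
      proof
        assume "d = p"
        then have "E b p" using Ebd by simp
        then have "b = u" using uniq step.IH by auto
        then show False using Ebd by simp
      qed
      then show ?case using R_closed[of b p w d] step.IH Ebd less.prems(3) by auto
    qed
  qed
  have lt: "card (R u w') < card ?R"
  proof (rule psubset_card_mono[OF fin])
    show "R u w' \<subset> ?R" using sub uR by blast
  qed
  have veto: "\<forall>c\<in>R u w'. k c u = u \<and> k u c = u"
    using key1[OF uR Eup] key2[OF uR Eup] sub by blast
  show False using less.hyps[OF lt uA(1) w'A w'u veto] .
qed

end

context two begin

lemma tr: assumes xA: "x \<in> A" and yA: "y \<in> A" shows "k x y = x \<or> k x y = y"
proof (rule ccontr)
  obtain v where kv: "k x y = v" by simp
  assume "\<not> (k x y = x \<or> k x y = y)"
  then have vx: "v \<noteq> x" and vy: "v \<noteq> y" using kv by auto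
  have vA: "v \<in> A" using kA[OF xA yA] kv by simp
  have a: "k c y = v" if "c \<in> R v x" for c
  proof -
    have "(x,c) \<in> (Ep v)\<^sup>*" using that by (simp add: R_def)
    then show ?thesis using prop1[of x c v y] yA kv by blast
  qed
  have yR: "y \<notin> R v x"
  proof
    assume "y \<in> R v x"
    then have "k y y = v" using a by blast
    then show False using unan[OF yA] vy by simp
  qed
  have b: "k c v = v" if "c \<in> R v x" for c
  proof -
    have "(y,v) \<in> {(x,y). E x y}\<^sup>*" using conn[OF yA vA] .
    moreover have "c \<in> A" using R_A[OF that xA] .
    ultimately show ?thesis using stay2 a[OF that] by blast
  qed
  have c: "k x c = v" if "c \<in> R v y" for c
  proof -
    have "(y,c) \<in> (Ep v)\<^sup>*" using that by (simp add: R_def)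
    then show ?thesis using prop2[of y c v x] xA kv by blast
  qed
  have d: "k v c = v" if "c \<in> R v y" for c
  proof -
    have "(x,v) \<in> {(x,y). E x y}\<^sup>*" using conn[OF xA vA] .
    moreover have "c \<in> A" using R_A[OF that yA] .
    ultimately show ?thesis using stay1 c[OF that] by blast
  qed
  obtain u where uR: "u \<in> R v x" and Euv: "E u v" using first_hit[OF xA vA] vx by metis
  obtain u' where u'R: "u' \<in> R v y" and Eu'v: "E u' v" using first_hit[OF yA vA] vy by metis
  have uA: "u \<in> A" "u \<noteq> v" using R_A[OF uR xA] R_neq[OF uR] vx by auto
  have u'A: "u' \<in> A" "u' \<noteq> v" using R_A[OF u'R yA] R_neq[OF u'R] vy by auto
  have uu': "u \<noteq> u'"
  proof
    assume "u = u'"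
    then have "(u,y) \<in> (Ep v)\<^sup>*" using u'R Ep_sym by (simp add: R_def)
    moreover have "(x,u) \<in> (Ep v)\<^sup>*" using uR by (simp add: R_def)
    ultimately have "y \<in> R v x" by (simp add: R_def)
    then show False using yR by blast
  qed
  have e1: "k u' v = u' \<or> k u' v = v" using edge2[OF Eu'v u'A(1)] unan[OF u'A(1)] by simp
  have e2: "k u' u = k u' v \<or> k u' u = u" using edge2[OF Esym[OF Euv] u'A(1)] .
  have e3: "k v u = u \<or> k v u = v" using edge1[OF Euv uA(1)] unan[OF uA(1)] by simp
  have dy: "\<forall>c\<in>R v y. k c v = v \<and> k v c = v" if h: "\<forall>c\<in>R v y. k c v = v"
    using h d by blast
  consider "k u' u = v" | "k u' u = u" | "k u' u = u'" using e1 e2 by auto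
  then show False
  proof cases
    case 1
    have "k c v = v" if "c \<in> R v y" for c
    proof -
      have "(u',c) \<in> (Ep v)\<^sup>*" using R_conn[OF u'R that] .
      then have "k c u = v" using prop1 1 uA(1) by blast
      moreover have "(u,v) \<in> {(x,y). E x y}\<^sup>*" using Euv by auto
      moreover have "c \<in> A" using R_A[OF that yA] .
      ultimately show ?thesis using stay2 by blast
    qed
    then show False using noDV[OF vA yA vy[symmetric]] d by blast
  next
    case 2
    have "k u' v = k u' u \<or> k u' v = v" using edge2[OF Euv u'A(1)] .
    then have ku'v: "k u' v = v" using 2 e1 uu' uA(2) by auto
    have "k c v = v" if "c \<in> R v y" for c
    proof -
      have "(u',c) \<in> (Ep v)\<^sup>*" using R_conn[OF u'R that] .
      then show ?thesis using prop1 ku'v vA by blast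
    qed
    then show False using noDV[OF vA yA vy[symmetric]] d by blast
  next
    case 3
    have "k v u = k u' u \<or> k v u = v" using edge1[OF Eu'v uA(1)] .
    then have kvu: "k v u = v" using 3 e3 uu' u'A(2) by auto
    have "k v c = v" if "c \<in> R v x" for c
    proof -
      have "(u,c) \<in> (Ep v)\<^sup>*" using R_conn[OF uR that] .
      then show ?thesis using prop2 kvu vA by blast
    qed
    then show False using noDV[OF vA xA vx[symmetric]] b by blast
  qed
qed

lemma W1prop: assumes "(a,d) \<in> (Ep b)\<^sup>*" "k a b = a" "b \<in> A" "a \<in> A" shows "k d b = d"
  using assms(1)
proof (induction rule: rtrancl_induct)
  case base then show ?case using assms by simp
next
  case (step e d)
  from step.hyps(2) have Eed: "E e d" "e \<noteq> b" "d \<noteq> b" by (auto simp: Ep_def)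
  have dA: "d \<in> A" using EA Eed(1) by blast
  show ?case
  proof (rule ccontr)
    assume "k d b \<noteq> d"
    then have kdb: "k d b = b" using tr[OF dA assms(3)] by blast
    then have "k d b \<noteq> k e b" using step.IH Eed(2) by simp
    then have "k d b = d" using EP1[OF Esym[OF Eed(1)] assms(3)] by blast
    then show False using kdb Eed(3) by simp
  qed
qed

lemma claim2a: assumes yA: "y \<in> A" shows "(\<forall>a\<in>A. k a y = a) \<or> (\<forall>a\<in>A. k a y = y)"
proof (rule ccontr)
  assume "\<not> ((\<forall>a\<in>A. k a y = a) \<or> (\<forall>a\<in>A. k a y = y))"
  then obtain c c' where cA: "c \<in> A" and kc0: "k c y \<noteq> y" and c'A: "c' \<in> A" and kc'0: "k c' y \<noteq> c'"
    by blast
  have kc: "k c y = c" using tr[OF cA yA] kc0 by blast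
  have cy: "c \<noteq> y" using kc0 unan[OF yA] by blast
  have kc': "k c' y = y" using tr[OF c'A yA] kc'0 by blast
  have c'y: "c' \<noteq> y" using kc'0 unan[OF yA] by blast
  have c'R: "c' \<notin> R y c"
  proof
    assume "c' \<in> R y c"
    then have "(c,c') \<in> (Ep y)\<^sup>*" by (simp add: R_def)
    then have "k c' y = c'" using W1prop kc yA cA by blast
    then show False using kc'0 by simp
  qed
  have cR: "c \<notin> R y c'"
  proof
    assume "c \<in> R y c'"
    then have "(c',c) \<in> (Ep y)\<^sup>*" by (simp add: R_def)
    then have "k c y = y" using prop1 kc' yA by blast
    then show False using kc0 by simp
  qed
  have path1: "(y,c') \<in> (Ep c)\<^sup>*"
  proof -
    obtain s where sR: "s \<in> R y c'" and Esy: "E s y" using first_hit[OF c'A yA c'y] by blast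
    have "(c',s) \<in> (Ep y)\<^sup>*" using sR by (simp add: R_def)
    then have 1: "(c',s) \<in> (Ep c)\<^sup>*" using avoid cR by blast
    have "s \<noteq> c" using sR cR by blast
    then have "(s,y) \<in> Ep c" using Esy cy by (auto simp: Ep_def)
    then have "(c',y) \<in> (Ep c)\<^sup>*" using 1 by simp
    then show ?thesis using Ep_sym by blast
  qed
  have path2: "(c,y) \<in> (Ep c')\<^sup>*"
  proof -
    obtain s where sR: "s \<in> R y c" and Esy: "E s y" using first_hit[OF cA yA cy] by blast
    have "(c,s) \<in> (Ep y)\<^sup>*" using sR by (simp add: R_def)
    then have 1: "(c,s) \<in> (Ep c')\<^sup>*" using avoid c'R by blast
    have "s \<noteq> c'" using sR c'R by blast
    then have "(s,y) \<in> Ep c'" using Esy c'y by (auto simp: Ep_def)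
    then show "(c,y) \<in> (Ep c')\<^sup>*" using 1 by simp
  qed
  have kcc': "k c c' = c" using prop2[OF path1, of c] kc cA by blast
  have kyc': "k y c' = y" using W1prop[OF path2 kcc' c'A cA] .
  have v: "\<forall>z\<in>R y c'. k z y = y \<and> k y z = y"
  proof
    fix z assume "z \<in> R y c'"
    then have "(c',z) \<in> (Ep y)\<^sup>*" by (simp add: R_def)
    then show "k z y = y \<and> k y z = y" using prop1[of c' z y y] prop2[of c' z y y] kc' kyc' yA by blast
  qed
  show False using noDV[OF yA c'A c'y v] .
qed

lemma two_voter: assumes "A \<noteq> {}" shows "(\<exists>y\<in>A. \<forall>a\<in>A. k a y = a) \<or> (\<exists>x\<in>A. \<forall>b\<in>A. k x b = b)"
proof (cases "\<exists>y\<in>A. \<forall>a\<in>A. k a y = a")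
  case False
  then have h: "\<forall>y\<in>A. \<forall>a\<in>A. k a y = y" using claim2a by blast
  obtain x where "x \<in> A" using assms by blast
  then show ?thesis using h by blast
qed simp

end

lemma upd_PiE: "x \<in> I \<rightarrow>\<^sub>E A \<Longrightarrow> i \<in> I \<Longrightarrow> b \<in> A \<Longrightarrow> x(i:=b) \<in> I \<rightarrow>\<^sub>E A"
  by (auto simp: PiE_iff extensional_def)

lemma upd_PiE2: "z \<in> (I - {i}) \<rightarrow>\<^sub>E A \<Longrightarrow> i \<in> I \<Longrightarrow> b \<in> A \<Longrightarrow> z(i:=b) \<in> I \<rightarrow>\<^sub>E A"
  by (auto simp: PiE_iff extensional_def)

context grph begin

definition EPg :: "nat set \<Rightarrow> ((nat \<Rightarrow> 'a) \<Rightarrow> 'a) \<Rightarrow> bool" where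
  "EPg I g \<longleftrightarrow> (\<forall>i\<in>I. \<forall>x\<in>I \<rightarrow>\<^sub>E A. \<forall>b. E (x i) b \<longrightarrow> g x \<noteq> g (x(i:=b)) \<longrightarrow> g x = x i \<and> g (x(i:=b)) = b)"

definition unanG :: "nat set \<Rightarrow> ((nat \<Rightarrow> 'a) \<Rightarrow> 'a) \<Rightarrow> bool" where
  "unanG I g \<longleftrightarrow> (\<forall>x\<in>I \<rightarrow>\<^sub>E A. \<forall>a. (\<forall>i\<in>I. x i = a) \<longrightarrow> g x = a)"

definition rangeG :: "nat set \<Rightarrow> ((nat \<Rightarrow> 'a) \<Rightarrow> 'a) \<Rightarrow> bool" where
  "rangeG I g \<longleftrightarrow> (\<forall>x\<in>I \<rightarrow>\<^sub>E A. g x \<in> A)"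

lemma EPgD: "EPg I g \<Longrightarrow> i \<in> I \<Longrightarrow> x \<in> I \<rightarrow>\<^sub>E A \<Longrightarrow> E (x i) b \<Longrightarrow> g x \<noteq> g (x(i:=b)) \<Longrightarrow> g x = x i \<and> g (x(i:=b)) = b"
  unfolding EPg_def by blast

lemma fd_step:
  assumes iI: "i \<in> I" and jI: "j \<in> I" and ji: "j \<noteq> i" and ep: "EPg I g" and x: "x \<in> I \<rightarrow>\<^sub>E A"
    and full: "\<forall>a\<in>A. g (x(i:=a)) = a" and Ec: "E (x j) c"
  shows "\<forall>a\<in>A. g (x(j:=c, i:=a)) = a"
proof -
  have cA: "c \<in> A" and xjA: "x j \<in> A" using EA[OF Ec] by auto
  have x1: "x(j:=c) \<in> I \<rightarrow>\<^sub>E A" using upd_PiE[OF x jI cA] .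
  have ne: "g (x(j:=c, i:=a)) = a" if aA: "a \<in> A" and axj: "a \<noteq> x j" for a
  proof -
    have z: "x(i:=a) \<in> I \<rightarrow>\<^sub>E A" using upd_PiE[OF x iI aA] .
    have zj: "(x(i:=a)) j = x j" using ji by simp
    have eq: "(x(i:=a))(j:=c) = x(j:=c, i:=a)" using ji by (simp add: fun_upd_twist)
    have gz: "g (x(i:=a)) = a" using full aA by blast
    show ?thesis
    proof (rule ccontr)
      assume "g (x(j:=c, i:=a)) \<noteq> a"
      then have "g (x(i:=a)) \<noteq> g ((x(i:=a))(j:=c))" using eq gz by simp
      moreover have "E ((x(i:=a)) j) c" using zj Ec by simp
      ultimately have "g (x(i:=a)) = (x(i:=a)) j" using EPgD[OF ep jI z] by blast
      then show False using gz axj zj by simp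
    qed
  qed
  have eqx: "g (x(j:=c, i:=x j)) = x j"
  proof (rule ccontr)
    assume ne': "g (x(j:=c, i:=x j)) \<noteq> x j"
    obtain b1 b2 where b: "E (x j) b1" "E (x j) b2" "b1 \<noteq> b2" using deg2[OF xjA] by blast
    have y: "x(j:=c, i:=x j) \<in> I \<rightarrow>\<^sub>E A" using upd_PiE[OF x1 iI xjA] .
    have val: "g (x(j:=c, i:=x j)) = b" if Eb: "E (x j) b" for b
    proof (rule ccontr)
      assume nb: "g (x(j:=c, i:=x j)) \<noteq> b"
      have bA: "b \<in> A" using EA[OF Eb] by simp
      have bx: "b \<noteq> x j" using Eb Eirr by blast
      have "g (x(j:=c, i:=b)) = b" using ne[OF bA bx] .
      moreover have "(x(j:=c, i:=x j))(i:=b) = x(j:=c, i:=b)" by simp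
      ultimately have "g (x(j:=c, i:=x j)) \<noteq> g ((x(j:=c, i:=x j))(i:=b))" using nb by simp
      moreover have "E ((x(j:=c, i:=x j)) i) b" using Eb by simp
      ultimately have "g (x(j:=c, i:=x j)) = (x(j:=c, i:=x j)) i" using EPgD[OF ep iI y] by blast
      then show False using ne' by simp
    qed
    show False using val[OF b(1)] val[OF b(2)] b(3) by simp
  qed
  show ?thesis
  proof
    fix a assume aA: "a \<in> A"
    show "g (x(j:=c, i:=a)) = a"
    proof (cases "a = x j")
      case True then show ?thesis using eqx by simp
    next
      case False then show ?thesis using ne aA by blast
    qed
  qed
qed

lemma fd_walk:
  assumes iI: "i \<in> I" and jI: "j \<in> I" and ji: "j \<noteq> i" and ep: "EPg I g" and x: "x \<in> I \<rightarrow>\<^sub>E A"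
    and full: "\<forall>a\<in>A. g (x(i:=a)) = a" and w: "(x j, c) \<in> {(a,b). E a b}\<^sup>*"
  shows "\<forall>a\<in>A. g (x(j:=c, i:=a)) = a"
  using w
proof (induction rule: rtrancl_induct)
  case base
  then show ?case using full by (simp only: fun_upd_triv)
next
  case (step b d)
  have Ebd: "E b d" using step.hyps(2) by simp
  have bA: "b \<in> A" using EA[OF Ebd] by simp
  have xb: "x(j:=b) \<in> I \<rightarrow>\<^sub>E A" using upd_PiE[OF x jI bA] .
  have xbj: "E ((x(j:=b)) j) d" using Ebd by simp
  have "\<forall>a\<in>A. g (x(j:=b, j:=d, i:=a)) = a"
    using fd_step[OF iI jI ji ep xb step.IH xbj] .
  then show ?case by (simp only: fun_upd_upd)
qed

lemma fd_all:
  assumes iI: "i \<in> I" and fin: "finite I" and ep: "EPg I g" and x: "x \<in> I \<rightarrow>\<^sub>E A"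
    and full: "\<forall>a\<in>A. g (x(i:=a)) = a" and x': "x' \<in> I \<rightarrow>\<^sub>E A"
  shows "g x' = x' i"
proof -
  have finI: "finite (I - {i})" using fin by simp
  have P: "(\<lambda>l. if l \<in> J then x' l else x l) \<in> I \<rightarrow>\<^sub>E A \<and> (\<forall>a\<in>A. g ((\<lambda>l. if l \<in> J then x' l else x l)(i:=a)) = a)"
    if "J \<subseteq> I - {i}" for J
  proof -
    have "finite J" using finI that finite_subset by blast
    then show ?thesis using that
    proof (induction J rule: finite_induct)
      case empty
      have e: "(\<lambda>l. if l \<in> {} then x' l else x l) = x" by simp
      show ?case unfolding e using x full by blast
    next
      case (insert j J)
      let ?y = "\<lambda>l. if l \<in> J then x' l else x l"
      have JI: "J \<subseteq> I - {i}" using insert.prems by blast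
      note IH0 = insert.IH[OF JI]
      have IH: "?y \<in> I \<rightarrow>\<^sub>E A" "\<forall>a\<in>A. g (?y(i:=a)) = a" by (rule conjunct1[OF IH0], rule conjunct2[OF IH0])
      have jI: "j \<in> I" "j \<noteq> i" using insert by auto
      have yj: "?y j = x j" using insert by simp
      have "x j \<in> A" "x' j \<in> A" using x x' jI by auto
      then have "(?y j, x' j) \<in> {(a,b). E a b}\<^sup>*" using conn yj by simp
      then have h1: "\<forall>a\<in>A. g (?y(j:=x' j, i:=a)) = a" using fd_walk[OF iI jI(1) jI(2) ep IH(1) IH(2)] by blast
      have eqY: "?y(j:=x' j) = (\<lambda>l. if l \<in> insert j J then x' l else x l)" by auto
      have mem: "(\<lambda>l. if l \<in> insert j J then x' l else x l) \<in> I \<rightarrow>\<^sub>E A"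
        using x x' insert.prems by (auto simp: PiE_iff extensional_def)
      have "\<forall>a\<in>A. g ((\<lambda>l. if l \<in> insert j J then x' l else x l)(i:=a)) = a"
        using h1 unfolding eqY .
      then show ?case by (rule conjI[OF mem])
    qed
  qed
  have "\<forall>a\<in>A. g ((\<lambda>l. if l \<in> I - {i} then x' l else x l)(i:=a)) = a" using P by blast
  moreover have "(\<lambda>l. if l \<in> I - {i} then x' l else x l)(i:=x' i) = x'"
    using x x' by (auto simp: PiE_iff extensional_def)
  moreover have "x' i \<in> A" using x' iI by auto
  ultimately show ?thesis by metis
qed

lemma group:
  assumes ep: "EPg I g" and x: "x \<in> I \<rightarrow>\<^sub>E A" and fin: "finite S" and SI: "S \<subseteq> I"
    and xb: "\<forall>l\<in>S. x l = b" and Ebb: "E b b'"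
  shows "g x \<noteq> g (\<lambda>l. if l \<in> S then b' else x l) \<longrightarrow> g x = b \<and> g (\<lambda>l. if l \<in> S then b' else x l) = b'"
  using fin SI xb
proof (induction S rule: finite_induct)
  case empty then show ?case by simp
next
  case (insert s F)
  let ?y = "\<lambda>l. if l \<in> F then b' else x l"
  let ?y' = "\<lambda>l. if l \<in> insert s F then b' else x l"
  have b'A: "b' \<in> A" using EA[OF Ebb] by simp
  have bb: "b \<noteq> b'" using Ebb Eirr by blast
  have IH: "g x \<noteq> g ?y \<longrightarrow> g x = b \<and> g ?y = b'" using insert by auto
  have y: "?y \<in> I \<rightarrow>\<^sub>E A" using x insert.prems b'A by (auto simp: PiE_iff extensional_def)
  have ys: "?y s = b" using insert by simp
  have sI: "s \<in> I" using insert by simp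
  have eq: "?y' = ?y(s := b')" by auto
  have st: "g ?y \<noteq> g ?y' \<longrightarrow> g ?y = b \<and> g ?y' = b'"
    using EPgD[OF ep sI y, of b'] ys Ebb eq by auto
  show ?case using IH st bb by metis
qed

lemma main:
  "finite I \<Longrightarrow> I \<noteq> {} \<Longrightarrow> A \<noteq> {} \<Longrightarrow> unanG I g \<Longrightarrow> EPg I g \<Longrightarrow> rangeG I g
   \<Longrightarrow> \<exists>i\<in>I. \<forall>x\<in>I \<rightarrow>\<^sub>E A. g x = x i"
proof (induction "card I" arbitrary: I g rule: less_induct)
  case (less I g)
  note finI = less.prems(1) and Ine = less.prems(2) and Ane = less.prems(3)
    and un = less.prems(4) and ep = less.prems(5) and rg = less.prems(6)
  obtain i0 where i0: "i0 \<in> I" using Ine by blast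
  define k where "k = (\<lambda>a b. g (restrict (\<lambda>l. if l = i0 then a else b) I))"
  have prof: "restrict (\<lambda>l. if l = i0 then a else b) I \<in> I \<rightarrow>\<^sub>E A" if "a \<in> A" "b \<in> A" for a b
    using that by auto
  have tw: "two A E k"
  proof (rule two.intro)
    show "grph A E" by (rule grph_axioms)
    show "two_axioms A E k"
    proof
      fix a assume aA: "a \<in> A"
      have "restrict (\<lambda>l. if l = i0 then a else a) I \<in> I \<rightarrow>\<^sub>E A" using prof aA by blast
      then show "k a a = a" using un unfolding unanG_def k_def by auto
    next
      fix a b assume "a \<in> A" "b \<in> A"
      then show "k a b \<in> A" using rg prof unfolding rangeG_def k_def by blast
    next
      fix a a' b assume Eaa: "E a a'" and bA: "b \<in> A" and ne: "k a b \<noteq> k a' b"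
      have aA: "a \<in> A" using EA[OF Eaa] by simp
      let ?x = "restrict (\<lambda>l. if l = i0 then a else b) I"
      have eq: "?x(i0 := a') = restrict (\<lambda>l. if l = i0 then a' else b) I" using i0 by auto
      have "g ?x \<noteq> g (?x(i0 := a'))" using ne eq unfolding k_def by simp
      moreover have "E (?x i0) a'" using Eaa i0 by simp
      ultimately have "g ?x = ?x i0 \<and> g (?x(i0:=a')) = a'" using EPgD[OF ep i0 prof[OF aA bA]] by blast
      then show "k a b = a \<and> k a' b = a'" using eq i0 unfolding k_def by simp
    next
      fix b b' a assume Ebb: "E b b'" and aA: "a \<in> A" and ne: "k a b \<noteq> k a b'"
      have bA: "b \<in> A" using EA[OF Ebb] by simp
      let ?x = "restrict (\<lambda>l. if l = i0 then a else b) I"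
      have eq: "(\<lambda>l. if l \<in> I - {i0} then b' else ?x l) = restrict (\<lambda>l. if l = i0 then a else b') I"
        by auto
      have "g ?x \<noteq> g (\<lambda>l. if l \<in> I - {i0} then b' else ?x l)" using ne eq unfolding k_def by simp
      then have "g ?x = b \<and> g (\<lambda>l. if l \<in> I - {i0} then b' else ?x l) = b'"
        using group[OF ep prof[OF aA bA], of "I - {i0}" b b'] finI Ebb by auto
      then show "k a b = b \<and> k a b' = b'" using eq unfolding k_def by simp
    qed
  qed
  have tv: "(\<exists>y\<in>A. \<forall>a\<in>A. k a y = a) \<or> (\<exists>x\<in>A. \<forall>b\<in>A. k x b = b)"
    using two.two_voter[OF tw Ane] .
  then show ?case
  proof
    assume "\<exists>y\<in>A. \<forall>a\<in>A. k a y = a"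
    then obtain y where yA: "y \<in> A" and hy: "\<forall>a\<in>A. k a y = a" by blast
    let ?x = "restrict (\<lambda>l. if l = i0 then y else y) I"
    have "\<forall>a\<in>A. g (?x(i0:=a)) = a"
    proof
      fix a assume aA: "a \<in> A"
      have "?x(i0:=a) = restrict (\<lambda>l. if l = i0 then a else y) I" using i0 by auto
      then show "g (?x(i0:=a)) = a" using hy aA unfolding k_def by simp
    qed
    then have "\<forall>x'\<in>I \<rightarrow>\<^sub>E A. g x' = x' i0" using fd_all[OF i0 finI ep prof[OF yA yA]] by blast
    then show ?thesis using i0 by blast
  next
    assume "\<exists>x\<in>A. \<forall>b\<in>A. k x b = b"
    then obtain x0 where x0A: "x0 \<in> A" and hx: "\<forall>b\<in>A. k x0 b = b" by blast
    show ?thesis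
    proof (cases "I = {i0}")
      case True
      have "\<forall>x\<in>I \<rightarrow>\<^sub>E A. g x = x i0"
      proof
        fix x assume "x \<in> I \<rightarrow>\<^sub>E A"
        moreover have "\<forall>i\<in>I. x i = x i0" using True by simp
        ultimately show "g x = x i0" using un unfolding unanG_def by blast
      qed
      then show ?thesis using i0 by blast
    next
      case False
      let ?I = "I - {i0}"
      define g' where "g' = (\<lambda>z. g (z(i0 := x0)))"
      have I'ne: "?I \<noteq> {}" using False i0 by blast
      have fin': "finite ?I" using finI by simp
      have lt: "card ?I < card I" using card_Diff1_less[OF finI i0] .
      have un': "unanG ?I g'"
        unfolding unanG_def
      proof (intro ballI allI impI)
        fix z a assume z: "z \<in> ?I \<rightarrow>\<^sub>E A" and all: "\<forall>i\<in>?I. z i = a"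
        obtain i1 where i1: "i1 \<in> ?I" using I'ne by blast
        have "z i1 \<in> A" using PiE_mem[OF z i1] .
        moreover have "z i1 = a" using all i1 by blast
        ultimately have aA: "a \<in> A" by simp
        have "z(i0 := x0) = restrict (\<lambda>l. if l = i0 then x0 else a) I"
        proof (rule ext)
          fix l
          show "(z(i0 := x0)) l = restrict (\<lambda>l. if l = i0 then x0 else a) I l"
          proof (cases "l = i0")
            case True then show ?thesis using i0 by simp
          next
            case False
            show ?thesis
            proof (cases "l \<in> I")
              case True then show ?thesis using False all by simp
            next
              case nI: False
              then have "l \<notin> ?I" by blast
              then have "z l = undefined" using PiE_arb[OF z] by blast
              then show ?thesis using False nI by simp
            qed
          qed
        qed
        then show "g' z = a" using hx aA unfolding g'_def k_def by simp
      qed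
      have ep': "EPg ?I g'"
        unfolding EPg_def
      proof (intro ballI allI impI)
        fix i z b assume iI: "i \<in> ?I" and z: "z \<in> ?I \<rightarrow>\<^sub>E A" and Eb: "E (z i) b"
          and ne: "g' z \<noteq> g' (z(i:=b))"
        have z0: "z(i0:=x0) \<in> I \<rightarrow>\<^sub>E A" using upd_PiE2[OF z i0 x0A] .
        have ii0: "i \<noteq> i0" "i \<in> I" using iI by auto
        have e1: "(z(i0:=x0)) i = z i" using ii0 by simp
        have e2: "z(i:=b, i0:=x0) = (z(i0:=x0))(i:=b)" using ii0 by (simp add: fun_upd_twist)
        have "g (z(i0:=x0)) \<noteq> g ((z(i0:=x0))(i:=b))" using ne e2 unfolding g'_def by simp
        then have "g (z(i0:=x0)) = (z(i0:=x0)) i \<and> g ((z(i0:=x0))(i:=b)) = b"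
          using EPgD[OF ep ii0(2) z0] Eb e1 by simp
        then show "g' z = z i \<and> g' (z(i:=b)) = b" using e1 e2 unfolding g'_def by simp
      qed
      have rg': "rangeG ?I g'"
        unfolding rangeG_def g'_def using rg upd_PiE2[OF _ i0 x0A] unfolding rangeG_def by blast
      obtain j where jI: "j \<in> ?I" and dj: "\<forall>z\<in>?I \<rightarrow>\<^sub>E A. g' z = z j"
        using less.hyps[OF lt fin' I'ne Ane un' ep' rg'] by blast
      let ?z0 = "restrict (\<lambda>l. x0) ?I"
      have z0: "?z0 \<in> ?I \<rightarrow>\<^sub>E A" using x0A by auto
      let ?x1 = "?z0(i0 := x0)"
      have x1: "?x1 \<in> I \<rightarrow>\<^sub>E A" using upd_PiE2[OF z0 i0 x0A] .
      have ji0: "j \<noteq> i0" "j \<in> I" using jI by auto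
      have "\<forall>a\<in>A. g (?x1(j:=a)) = a"
      proof
        fix a assume aA: "a \<in> A"
        have "?x1(j:=a) = (?z0(j:=a))(i0:=x0)" using ji0 by (simp add: fun_upd_twist)
        moreover have "?z0(j:=a) \<in> ?I \<rightarrow>\<^sub>E A" using upd_PiE[OF z0 jI aA] .
        ultimately show "g (?x1(j:=a)) = a" using dj unfolding g'_def by auto
      qed
      then have "\<forall>x'\<in>I \<rightarrow>\<^sub>E A. g x' = x' j" using fd_all[OF ji0(2) finI ep x1] by blast
      then show ?thesis using ji0 by blast
    qed
  qed
qed

end

lemma adjacent_len: "adjacent L L' \<Longrightarrow> length L' = length L"
  unfolding adjacent_def by auto

lemma adjacent_sym: assumes "adjacent L L'" shows "adjacent L' L"
proof -
  obtain k where k: "Suc k < length L" and L': "L' = L[k := L ! Suc k, Suc k := L ! k]"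
    using assms unfolding adjacent_def by blast
  have len: "length L' = length L" using L' by simp
  have n1: "L' ! k = L ! Suc k" using L' k by (simp add: nth_list_update)
  have n2: "L' ! Suc k = L ! k" using L' k by (simp add: nth_list_update)
  have "L'[k := L' ! Suc k, Suc k := L' ! k] = L"
    by (rule nth_equalityI) (use L' k n1 n2 in \<open>auto simp: nth_list_update\<close>)
  then show ?thesis unfolding adjacent_def using k len by metis
qed

lemma adj0: assumes "adjacent L L'" "hd L \<noteq> hd L'"
  shows "L' = L[0 := L!1, 1 := L!0] \<and> 1 < length L"
proof -
  obtain k where k: "Suc k < length L" and L': "L' = L[k := L ! Suc k, Suc k := L ! k]"
    using assms unfolding adjacent_def by blast
  have "k = 0"
  proof (rule ccontr)
    assume "k \<noteq> 0"
    then have "L' ! 0 = L ! 0" using L' k by (simp add: nth_list_update)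
    moreover have "L \<noteq> []" "L' \<noteq> []" using k L' by auto
    ultimately have "hd L = hd L'" by (simp add: hd_conv_nth)
    then show False using assms(2) by simp
  qed
  then show ?thesis using L' k by simp
qed

lemma pref_total: assumes "distinct L" "u \<in> set L" "v \<in> set L" "u \<noteq> v"
  shows "pref L u v \<or> pref L v u"
proof -
  obtain i where i: "i < length L" "L ! i = u" using assms(2) by (auto simp: in_set_conv_nth)
  obtain j where j: "j < length L" "L ! j = v" using assms(3) by (auto simp: in_set_conv_nth)
  have "i \<noteq> j" using i j assms(4) by auto
  then have "i < j \<or> j < i" by arith
  then show ?thesis unfolding pref_def using i j by blast
qed

lemma swap_pref:
  assumes dL: "distinct L" and len: "1 < length L" and L': "L' = L[0 := L!1, 1 := L!0]"
    and p1: "pref L u v" and p2: "pref L' v u"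
  shows "u = L!0 \<and> v = L!1"
proof -
  obtain i j where ij: "i < j" "j < length L" "L!i = u" "L!j = v" using p1 unfolding pref_def by blast
  obtain i' j' where ij': "i' < j'" "j' < length L'" "L'!i' = v" "L'!j' = u" using p2 unfolding pref_def by blast
  have lenL': "length L' = length L" using L' by simp
  have nth': "L'!t = (if t = 0 then L!1 else if t = 1 then L!0 else L!t)" if "t < length L" for t
    using that L' len by (auto simp: nth_list_update)
  have inj: "p = q" if "p < length L" "q < length L" "L!p = L!q" for p q
    using that dL nth_eq_iff_index_eq by blast
  have j'l: "j' < length L" using ij' lenL' by simp
  have i'l: "i' < length L" using ij' lenL' by simp
  consider "j' = 1" | "j' \<ge> 2" using ij'(1) by arith
  then show ?thesis
  proof cases
    case 1
    then have i'0: "i' = 0" using ij'(1) by simp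
    have "L!0 = u" using ij'(4) nth'[OF j'l] 1 by simp
    moreover have "L!1 = v" using ij'(3) nth'[OF i'l] i'0 by simp
    ultimately show ?thesis by simp
  next
    case 2
    have "L!j' = u" using ij'(4) nth'[OF j'l] 2 by simp
    then have ij'eq: "i = j'" using inj[OF ij'(2)[unfolded lenL'] ij(1)[THEN less_trans, OF ij(2)]] ij(3)
      by (metis ij(1) ij(2) inj j'l less_trans)
    consider "i' = 0" | "i' = 1" | "i' \<ge> 2" by arith
    then show ?thesis
    proof cases
      case 1
      then have "L!1 = v" using ij'(3) nth'[OF i'l] by simp
      then have "j = 1" using inj[OF ij(2) len] ij(4) by simp
      then show ?thesis using ij ij'eq 2 by simp
    next
      case 2
      then have "L!0 = v" using ij'(3) nth'[OF i'l] by simp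
      moreover have "0 < length L" using len by linarith
      ultimately have "j = 0" using inj[OF ij(2), of 0] ij(4) by simp
      then show ?thesis using ij by simp
    next
      case 3
      then have "L!i' = v" using ij'(3) nth'[OF i'l] by simp
      then have "j = i'" using inj[OF ij(2) i'l] ij(4) by simp
      then show ?thesis using ij ij' ij'eq by simp
    qed
  qed
qed

lemma top_adj:
  assumes "adjacent L L'" "top L \<noteq> top L'" "distinct L" "u \<in> set L" "v \<in> set L" "u \<noteq> v"
    and "\<not> pref L v u" "\<not> pref L' u v"
  shows "u = top L \<and> v = top L'"
proof -
  have a0: "L' = L[0 := L!1, 1 := L!0]" "1 < length L" using adj0 assms(1,2) unfolding top_def by auto
  have ds: "distinct (L[0 := L!1, 1 := L!0]) = distinct L" by (rule distinct_swap) (use a0(2) in auto)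
  have ss: "set (L[0 := L!1, 1 := L!0]) = set L" by (rule set_swap) (use a0(2) in auto)
  have dL': "distinct L'" using ds a0(1) assms(3) by simp
  have "set L' = set L" using ss a0(1) by simp
  then have "pref L' v u" using pref_total[OF dL', of u v] assms(4-6,8) by blast
  moreover have "pref L u v" using pref_total[OF assms(3-6)] assms(7) by blast
  ultimately have "u = L!0 \<and> v = L!1" using swap_pref[OF assms(3) a0(2) a0(1)] by blast
  moreover have "L \<noteq> []" "L' \<noteq> []" using a0 by auto
  moreover have "L'!0 = L!1"
  proof -
    have "0 < length L" using a0(2) by linarith
    then show ?thesis using a0(1) by simp
  qed
  ultimately show ?thesis unfolding top_def by (simp add: hd_conv_nth)
qed


lemma TCC_top: assumes "Q \<in> TCC D L" "L \<in> D" shows "Q \<in> D \<and> top Q = top L"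
proof (cases "Q = L")
  case True then show ?thesis using assms by simp
next
  case False
  then have "Q \<in> D" "top_connected D L Q" using assms unfolding TCC_def by auto
  then obtain ps where ps: "path_in D ps" "hd ps = L" "last ps = Q" "\<forall>Q'\<in>set ps. top Q' = top L"
    unfolding top_connected_def by blast
  have "Q \<in> set ps" using ps(1,3) unfolding path_in_def by auto
  then show ?thesis using ps(4) \<open>Q \<in> D\<close> by blast
qed

lemma TCC_ext:
  assumes Q: "Q \<in> TCC D L" and LD: "L \<in> D" and adj: "adjacent Q L'" and L'D: "L' \<in> D"
    and tp: "top L' = top L"
  shows "L' \<in> TCC D L"
proof (cases "Q = L")
  case True
  show ?thesis
  proof (cases "L' = L")
    case True then show ?thesis unfolding TCC_def by simp
  next
    case False
    have "path_in D [L, L']"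
      unfolding path_in_def using False LD L'D adj \<open>Q = L\<close> by (auto simp: less_Suc_eq)
    then have "top_connected D L L'" unfolding top_connected_def using tp
      by (intro exI[of _ "[L, L']"]) auto
    then show ?thesis unfolding TCC_def using L'D by simp
  qed
next
  case False
  then have "top_connected D L Q" using Q unfolding TCC_def by auto
  then obtain ps where ps: "path_in D ps" "hd ps = L" "last ps = Q" "\<forall>Q'\<in>set ps. top Q' = top L"
    unfolding top_connected_def by blast
  have ne: "ps \<noteq> []" and dps: "distinct ps" and sps: "set ps \<subseteq> D"
    and aps: "\<forall>k. Suc k < length ps \<longrightarrow> adjacent (ps ! k) (ps ! Suc k)"
    using ps(1) unfolding path_in_def by auto
  show ?thesis
  proof (cases "L' \<in> set ps")
    case True
    then obtain j where j: "j < length ps" "ps ! j = L'" by (auto simp: in_set_conv_nth)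
    let ?qs = "take (Suc j) ps"
    have "path_in D ?qs"
      unfolding path_in_def
    proof (intro conjI allI impI)
      show "?qs \<noteq> []" using ne by simp
      show "distinct ?qs" using dps by simp
      show "set ?qs \<subseteq> D" using sps set_take_subset by (metis subset_trans)
      fix k assume "Suc k < length ?qs"
      then have "Suc k < length ps" "Suc k \<le> j" by auto
      then show "adjacent (?qs ! k) (?qs ! Suc k)" using aps by simp
    qed
    moreover have "hd ?qs = L" using ps(2) ne by simp
    moreover have "last ?qs = L'"
    proof -
      have len: "length ?qs = Suc j" using j by simp
      have "?qs \<noteq> []" using ne by simp
      then have "last ?qs = ?qs ! (length ?qs - 1)" by (rule last_conv_nth)
      also have "\<dots> = ?qs ! j" using len by simp
      also have "\<dots> = ps ! j" by simp
      finally show ?thesis using j by simp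
    qed
    moreover have "\<forall>Q'\<in>set ?qs. top Q' = top L" using ps(4) set_take_subset by fast
    ultimately have "top_connected D L L'" unfolding top_connected_def by blast
    then show ?thesis unfolding TCC_def using L'D by simp
  next
    case False
    let ?qs = "ps @ [L']"
    have "path_in D ?qs"
      unfolding path_in_def
    proof (intro conjI allI impI)
      show "?qs \<noteq> []" by simp
      show "distinct ?qs" using dps False by simp
      show "set ?qs \<subseteq> D" using sps L'D by simp
      fix k assume k: "Suc k < length ?qs"
      show "adjacent (?qs ! k) (?qs ! Suc k)"
      proof (cases "Suc k < length ps")
        case True
        then show ?thesis using aps by (simp add: nth_append)
      next
        case False
        then have "Suc k = length ps" using k by simp
        then have kk: "k = length ps - 1" "k < length ps" by auto
        have "?qs ! k = ps ! k" using kk(2) by (simp add: nth_append)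
        also have "\<dots> = last ps" using kk(1) ne by (simp add: last_conv_nth)
        finally have e1: "?qs ! k = last ps" .
        have "?qs ! Suc k = L'" using \<open>Suc k = length ps\<close> by (simp add: nth_append)
        note e1 this
        then show ?thesis using adj ps(3) by simp
      qed
    qed
    moreover have "hd ?qs = L" using ps(2) ne by simp
    moreover have "last ?qs = L'" by simp
    moreover have "\<forall>Q'\<in>set ?qs. top Q' = top L" using ps(4) tp by simp
    ultimately have "top_connected D L L'" unfolding top_connected_def by blast
    then show ?thesis unfolding TCC_def using L'D by simp
  qed
qed

lemma neighbour_edge:
  assumes "L \<in> D" "neighbour D (TCC D L) L'"
  shows "\<exists>Q\<in>D. adjacent Q L' \<and> top Q = top L \<and> top L' \<noteq> top L \<and> L' \<in> D"
proof -
  obtain Q where Q: "Q \<in> TCC D L" "adjacent Q L'" and L'D: "L' \<in> D" and nt: "L' \<notin> TCC D L"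
    using assms(2) unfolding neighbour_def by blast
  have "Q \<in> D \<and> top Q = top L" using TCC_top[OF Q(1) assms(1)] .
  moreover have "top L' \<noteq> top L" using TCC_ext[OF Q(1) assms(1) Q(2) L'D] nt by blast
  ultimately show ?thesis using Q L'D by blast
qed

lemma path_tops:
  assumes "path_in D ps" "m < length ps"
    and "\<forall>L\<in>D. \<forall>L'\<in>D. adjacent L L' \<longrightarrow> top L \<noteq> top L' \<longrightarrow> Rl (top L) (top L')"
  shows "(top (ps!0), top (ps!m)) \<in> {(x,y). Rl x y}\<^sup>*"
  using assms(2)
proof (induction m)
  case 0 then show ?case by simp
next
  case (Suc m)
  have adj: "adjacent (ps!m) (ps!Suc m)" using assms(1) Suc.prems unfolding path_in_def by blast
  have inD: "ps!m \<in> D" "ps!Suc m \<in> D" using assms(1) Suc.prems unfolding path_in_def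
    by (auto dest: nth_mem)
  have IH: "(top (ps!0), top (ps!m)) \<in> {(x,y). Rl x y}\<^sup>*" using Suc by simp
  show ?case
  proof (cases "top (ps!m) = top (ps!Suc m)")
    case True then show ?thesis using IH by simp
  next
    case False
    then have "Rl (top (ps!m)) (top (ps!Suc m))" using assms(3) adj inD by blast
    then show ?thesis using IH by (simp add: rtrancl.rtrancl_into_rtrancl)
  qed
qed


theorem theorem2:
  fixes A :: "'a set" and n :: nat and D :: "'a list set"
    and f :: "(nat \<Rightarrow> 'a list) \<Rightarrow> 'a"
  assumes "finite A" and "card A \<ge> 3" and "n \<ge> 2"
    and "domain A D" and "minimally_rich A D" and "L_tops_only A n D"
    and "connected_two_neighbours D"
    and "scf A n D f" and "unanimous n D f" and "locally_strategy_proof n D f"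
  shows "dictatorial n D f"
proof -
  note finA = assms(1)
  have Ane: "A \<noteq> {}" using assms(2) by auto
  have Dlin: "distinct L \<and> set L = A" if "L \<in> D" for L
    using assms(4) that unfolding domain_def linear_order_on_def by blast
  have topA: "top L \<in> A" if "L \<in> D" for L
  proof -
    have "set L = A" using Dlin that by blast
    then have "L \<noteq> []" using Ane by auto
    then show ?thesis using \<open>set L = A\<close> unfolding top_def by (metis hd_in_set)
  qed
  have to: "tops_only n D f" using assms(6,8,9,10) unfolding L_tops_only_def by blast
  have toD: "f P = f P'" if "P \<in> profiles n D" "P' \<in> profiles n D" "\<forall>i<n. top (P i) = top (P' i)" for P P'
    using to that unfolding tops_only_def by blast
  obtain pr where pr: "\<forall>a\<in>A. pr a \<in> D \<and> top (pr a) = a"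
    using assms(5) unfolding minimally_rich_def by metis
  define E where "E = (\<lambda>a b. a \<noteq> b \<and> (\<exists>L\<in>D. \<exists>L'\<in>D. adjacent L L' \<and> top L = a \<and> top L' = b))"
  have gr: "grph A E"
  proof
    show "finite A" by (rule finA)
  next
    fix a b assume "E a b" then show "a \<in> A \<and> b \<in> A" unfolding E_def using topA by blast
  next
    fix a b assume "E a b" then show "E b a" unfolding E_def using adjacent_sym by blast
  next
    fix a show "\<not> E a a" unfolding E_def by simp
  next
    fix a b assume aA: "a \<in> A" and bA: "b \<in> A"
    have "pr a \<in> D" "pr b \<in> D" using pr aA bA by auto
    then obtain ps where ps: "path_in D ps" "hd ps = pr a" "last ps = pr b"
      using assms(7) unfolding connected_two_neighbours_def connected_dom_def by blast
    have ne: "ps \<noteq> []" using ps(1) unfolding path_in_def by blast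
    have st: "\<forall>L\<in>D. \<forall>L'\<in>D. adjacent L L' \<longrightarrow> top L \<noteq> top L' \<longrightarrow> E (top L) (top L')"
      unfolding E_def by blast
    have "(top (ps!0), top (ps!(length ps - 1))) \<in> {(x,y). E x y}\<^sup>*"
      using path_tops[OF ps(1) _ st] ne by simp
    moreover have "ps!0 = pr a" using ps(2) ne by (simp add: hd_conv_nth)
    moreover have "ps!(length ps - 1) = pr b" using ps(3) ne by (simp add: last_conv_nth)
    ultimately show "(a,b) \<in> {(x,y). E x y}\<^sup>*" using pr aA bA by simp
  next
    fix a assume aA: "a \<in> A"
    have LD: "pr a \<in> D" and tL: "top (pr a) = a" using pr aA by auto
    obtain L' L'' where nb: "neighbour D (TCC D (pr a)) L'" "neighbour D (TCC D (pr a)) L''"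
      and ne: "top L' \<noteq> top L''"
      using assms(7) LD unfolding connected_two_neighbours_def by blast
    have "E a (top L')" using neighbour_edge[OF LD nb(1)] tL unfolding E_def by metis
    moreover have "E a (top L'')" using neighbour_edge[OF LD nb(2)] tL unfolding E_def by metis
    ultimately show "\<exists>b c. E a b \<and> E a c \<and> b \<noteq> c" using ne by blast
  qed
  define g where "g = (\<lambda>x. f (restrict (\<lambda>i. pr (x i)) {..<n}))"
  have prof: "restrict (\<lambda>i. pr (x i)) {..<n} \<in> profiles n D" if "x \<in> {..<n} \<rightarrow>\<^sub>E A" for x
    using that pr unfolding profiles_def by auto
  have un: "grph.unanG A {..<n} g"
    unfolding grph.unanG_def[OF gr]
  proof (intro ballI allI impI)
    fix x a assume x: "x \<in> {..<n} \<rightarrow>\<^sub>E A" and all: "\<forall>i\<in>{..<n}. x i = a"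
    have "0 \<in> {..<n}" using assms(3) by simp
    then have aA: "a \<in> A" using x all by (metis PiE_mem)
    have "\<forall>i<n. top (restrict (\<lambda>i. pr (x i)) {..<n} i) = a" using all pr aA by simp
    then show "g x = a" using assms(9) prof[OF x] unfolding unanimous_def g_def by blast
  qed
  have rg: "grph.rangeG A {..<n} g"
    unfolding grph.rangeG_def[OF gr] g_def using prof assms(8) unfolding scf_def by blast
  have ep: "grph.EPg A E {..<n} g"
    unfolding grph.EPg_def[OF gr]
  proof (intro ballI allI impI)
    fix i x b assume iI: "i \<in> {..<n}" and x: "x \<in> {..<n} \<rightarrow>\<^sub>E A" and Eb: "E (x i) b"
      and ne: "g x \<noteq> g (x(i:=b))"
    obtain L L' where LD: "L \<in> D" "L' \<in> D" and adj: "adjacent L L'" and tL: "top L = x i"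
      and tL': "top L' = b" and xb: "x i \<noteq> b"
      using Eb unfolding E_def by blast
    have bA: "b \<in> A" using tL' topA LD by blast
    let ?P = "restrict (\<lambda>i. pr (x i)) {..<n}"
    have P: "?P \<in> profiles n D" using prof[OF x] .
    have P1: "?P(i:=L) \<in> profiles n D" using upd_PiE[of ?P "{..<n}" D i L] P LD iI unfolding profiles_def by blast
    have P2: "?P(i:=L') \<in> profiles n D" using upd_PiE[of ?P "{..<n}" D i L'] P LD iI unfolding profiles_def by blast
    have x': "x(i:=b) \<in> {..<n} \<rightarrow>\<^sub>E A" using upd_PiE[OF x iI bA] .
    have f1: "f (?P(i:=L)) = g x"
      unfolding g_def using toD[OF P1 P] tL pr x iI by (auto simp: PiE_iff)
    have f2: "f (?P(i:=L')) = g (x(i:=b))"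
      unfolding g_def using toD[OF P2 prof[OF x']] tL' pr bA by auto
    have lsp: "\<not> pref (P i) (f (P(i := L'))) (f P)" if "P \<in> profiles n D" "L' \<in> D" "adjacent (P i) L'" for P L'
      using assms(10) that iI unfolding locally_strategy_proof_def by blast
    have n1: "\<not> pref L (g (x(i:=b))) (g x)"
      using lsp[OF P1 LD(2)] adj f1 f2 by simp
    have n2: "\<not> pref L' (g x) (g (x(i:=b)))"
      using lsp[OF P2 LD(1)] adjacent_sym[OF adj] f1 f2 by simp
    have gA: "g x \<in> A" "g (x(i:=b)) \<in> A" using rg x x' unfolding grph.rangeG_def[OF gr] by auto
    have "g x = top L \<and> g (x(i:=b)) = top L'"
      using top_adj[OF adj _ _ _ _ ne n1 n2] Dlin[OF LD(1)] gA tL tL' xb by auto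
    then show "g x = x i \<and> g (x(i:=b)) = b" using tL tL' by simp
  qed
  obtain i where iI: "i \<in> {..<n}" and di: "\<forall>x\<in>{..<n} \<rightarrow>\<^sub>E A. g x = x i"
    using grph.main[OF gr _ _ Ane un ep rg] assms(3) by fastforce
  show ?thesis
    unfolding dictatorial_def
  proof (intro exI[of _ i] conjI ballI)
    show "i < n" using iI by simp
  next
    fix P assume P: "P \<in> profiles n D"
    let ?x = "restrict (\<lambda>j. top (P j)) {..<n}"
    have x: "?x \<in> {..<n} \<rightarrow>\<^sub>E A" using P topA unfolding profiles_def by auto
    have "g ?x = f P"
      unfolding g_def using toD[OF prof[OF x] P] pr topA P unfolding profiles_def by auto
    then show "f P = top (P i)" using di x iI by auto
  qed
qed

end
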